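(* For $d$RGP-UCB (single or multiple play), at any round $t\in\{1,d+1,2d+1,\dots\}$ at which a lookahead block starts and leaf $I_t$ is selected, $$\mathbb E\big[M^*(\mathbf Z_t)-M_{I_t}(\mathbf Z_t)\,\big|\,\mathcal F_{t-1}\big]\le\frac{\sqrt{2d\pi}}{(t+d-1)^2}+\alpha_t\varsigma_t(I_t).$$
   Context: Recovering bandits model: $K$ arms, $\mathcal Z=\{0,\dots,z_{\max}\}$; recovery functions $f_1,\dots,f_K:\mathcal Z\to\mathbb R$ drawn independently from a zero-mean GP with known kernel $k$, $k(z,z)\le1$. State $\mathbf Z_t\in\mathcal Z^K$; playing $J_t$ sets $Z_{J_t,t+1}=0$ and $Z_{j,t+1}=\min\{z_{\max},Z_{j,t}+1\}$ for $j\ne J_t$; observation $Y_t=f_{J_t}(Z_{J_t,t})+\epsilon_t$, $\epsilon_t$ i.i.d. $\mathcal N(0,\sigma^2)$. $\mathcal F_{t-1}$ is the $\sigma$-field generated by the arms played, observations and states up to round $t-1$. Lookahead tree from root $\mathbf Z$: leaves $i$ are arm sequences $(j_0,\dots,j_{d-1})$ (single play: distinct arms; multiple play: any), with $z$-values $z_\ell$ obtained by the update rule; $M_i(\mathbf Z)=\sum_\ell f_{j_\ell}(z_\ell)$, $M^*(\mathbf Z)=\max_iM_i(\mathbf Z)$ over the same leaf set. Given $\mathcal F_{t-1}$, $M_i(\mathbf Z_t)\sim\mathcal N(\eta_t(i),\varsigma_t^2(i))$ with $\eta_t(i)=\sum_\ell\mu_{j_\ell}(z_\ell;N_{j_\ell}(t-1))$,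 $\varsigma_t^2(i)=\sum_{\ell,q}\mathbb I\{j_\ell=j_q\}k_{j_\ell}(z_\ell,z_q;N_{j_\ell}(t-1))$, where $\mu_j(\cdot;n)$, $k_j(\cdot,\cdot;n)$ are the GP posterior mean and covariance of $f_j$ after its $n$ observations and $N_j(t-1)$ is the number of plays of $j$ before round $t$. $d$RGP-UCB selects $I_t\in\arg\max_i\{\eta_t(i)+\alpha_t\varsigma_t(i)\}$ with $\alpha_t=\sqrt{2\log((K|\mathcal Z|)^d(t+d-1)^2)}$. *)

theory Defs
  imports "HOL-Probability.Probability"
begin

text \<open>Arms are the naturals below K, z-values the naturals up to zmax.
  A state is a function arm => z-value (only its values on arms below K matter).\<close>

definition upd :: "nat \<Rightarrow> nat \<Rightarrow> (nat \<Rightarrow> nat) \<Rightarrow> (nat \<Rightarrow> nat)" where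
  "upd zmax j Z = (\<lambda>i. if i = j then 0 else min zmax (Z i + 1))"

fun zseq :: "nat \<Rightarrow> (nat \<Rightarrow> nat) \<Rightarrow> nat list \<Rightarrow> nat list" where
  "zseq zmax Z [] = []"
| "zseq zmax Z (j # js) = Z j # zseq zmax (upd zmax j Z) js"

text \<open>Leaves of the depth-d lookahead tree (single play, sp = True: distinct arms).\<close>
definition leaves :: "bool \<Rightarrow> nat \<Rightarrow> nat \<Rightarrow> nat list set" where
  "leaves sp K d = {js. length js = d \<and> set js \<subseteq> {..<K} \<and> (sp \<longrightarrow> distinct js)}"

definition leaf_value :: "nat \<Rightarrow> (nat \<Rightarrow> nat \<Rightarrow> real) \<Rightarrow> (nat \<Rightarrow> nat) \<Rightarrow> nat list \<Rightarrow> real" where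
  "leaf_value zmax f Z js = (\<Sum>l<length js. f (js ! l) (zseq zmax Z js ! l))"

definition best_value :: "nat \<Rightarrow> nat list set \<Rightarrow> (nat \<Rightarrow> nat \<Rightarrow> real) \<Rightarrow> (nat \<Rightarrow> nat) \<Rightarrow> real" where
  "best_value zmax L f Z = Max ((\<lambda>js. leaf_value zmax f Z js) ` L)"

definition gram_inv :: "(nat \<Rightarrow> nat \<Rightarrow> real) \<Rightarrow> real \<Rightarrow> nat list \<Rightarrow> nat \<Rightarrow> nat \<Rightarrow> real" where
  "gram_inv k s2 zs = (SOME W. \<forall>a<length zs. \<forall>b<length zs.
      (\<Sum>c<length zs. (k (zs ! a) (zs ! c) + (if a = c then s2 else 0)) * W c b)
        = (if a = b then 1 else 0))"

definition post_mean :: "(nat \<Rightarrow> nat \<Rightarrow> real) \<Rightarrow> real \<Rightarrow> (nat \<times> real) list \<Rightarrow> nat \<Rightarrow> real" where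
  "post_mean k s2 obs z =
     (let zs = map fst obs; ys = map snd obs; W = gram_inv k s2 zs; n = length obs in
      \<Sum>a<n. \<Sum>b<n. k z (zs ! a) * W a b * ys ! b)"

definition post_cov :: "(nat \<Rightarrow> nat \<Rightarrow> real) \<Rightarrow> real \<Rightarrow> (nat \<times> real) list \<Rightarrow> nat \<Rightarrow> nat \<Rightarrow> real" where
  "post_cov k s2 obs z z' =
     (let zs = map fst obs; W = gram_inv k s2 zs; n = length obs in
      k z z' - (\<Sum>a<n. \<Sum>b<n. k z (zs ! a) * W a b * k (zs ! b) z'))"

text \<open>Rounds are numbered from 1; J s is the arm played and Y s the observation in round s.
  state_at zmax Z1 J n is the state at round n+1, i.e. Z_t = state_at zmax Z1 J (t-1).\<close>
primrec state_at :: "nat \<Rightarrow> (nat \<Rightarrow> nat) \<Rightarrow> (nat \<Rightarrow> nat) \<Rightarrow> nat \<Rightarrow> (nat \<Rightarrow> nat)" where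
  "state_at zmax Z1 J 0 = Z1"
| "state_at zmax Z1 J (Suc n) = upd zmax (J (Suc n)) (state_at zmax Z1 J n)"

text \<open>Observations of arm j before round t: pairs (Z_{j,s}, Y_s) for s < t with J_s = j;
  its length is N_j(t-1).\<close>
definition obs_of :: "nat \<Rightarrow> (nat \<Rightarrow> nat) \<Rightarrow> (nat \<Rightarrow> nat) \<Rightarrow> (nat \<Rightarrow> real) \<Rightarrow> nat \<Rightarrow> nat \<Rightarrow> (nat \<times> real) list" where
  "obs_of zmax Z1 J Y j t =
     map (\<lambda>s. (state_at zmax Z1 J (s - 1) j, Y s)) (filter (\<lambda>s. J s = j) [1..<t])"

definition eta :: "(nat \<Rightarrow> nat \<Rightarrow> real) \<Rightarrow> real \<Rightarrow> nat \<Rightarrow> (nat \<Rightarrow> nat) \<Rightarrow> (nat \<Rightarrow> nat) \<Rightarrow> (nat \<Rightarrow> real)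
     \<Rightarrow> nat \<Rightarrow> nat list \<Rightarrow> real" where
  "eta k s2 zmax Z1 J Y t js =
     (let zs = zseq zmax (state_at zmax Z1 J (t - 1)) js in
      \<Sum>l<length js. post_mean k s2 (obs_of zmax Z1 J Y (js ! l) t) (zs ! l))"

definition varsig2 :: "(nat \<Rightarrow> nat \<Rightarrow> real) \<Rightarrow> real \<Rightarrow> nat \<Rightarrow> (nat \<Rightarrow> nat) \<Rightarrow> (nat \<Rightarrow> nat) \<Rightarrow> (nat \<Rightarrow> real)
     \<Rightarrow> nat \<Rightarrow> nat list \<Rightarrow> real" where
  "varsig2 k s2 zmax Z1 J Y t js =
     (let zs = zseq zmax (state_at zmax Z1 J (t - 1)) js in
      \<Sum>l<length js. \<Sum>q<length js.
        (if js ! l = js ! q then post_cov k s2 (obs_of zmax Z1 J Y (js ! l) t) (zs ! l) (zs ! q) else 0))"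

definition alpha :: "nat \<Rightarrow> nat \<Rightarrow> nat \<Rightarrow> nat \<Rightarrow> real" where
  "alpha K zmax d t = sqrt (2 * ln (real ((K * (zmax + 1)) ^ d) * real ((t + d - 1) ^ 2)))"

definition ucb :: "(nat \<Rightarrow> nat \<Rightarrow> real) \<Rightarrow> real \<Rightarrow> nat \<Rightarrow> nat \<Rightarrow> nat \<Rightarrow> (nat \<Rightarrow> nat) \<Rightarrow> (nat \<Rightarrow> nat)
     \<Rightarrow> (nat \<Rightarrow> real) \<Rightarrow> nat \<Rightarrow> nat list \<Rightarrow> real" where
  "ucb k s2 K zmax d Z1 J Y t js =
     eta k s2 zmax Z1 J Y t js + alpha K zmax d t * sqrt (varsig2 k s2 zmax Z1 J Y t js)"

definition gaussian_rv :: "'a measure \<Rightarrow> ('a \<Rightarrow> real) \<Rightarrow> real \<Rightarrow> real \<Rightarrow> bool" where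
  "gaussian_rv P X m v \<longleftrightarrow> X \<in> borel_measurable P \<and> v \<ge> 0 \<and>
     (if v = 0 then (AE \<omega> in P. X \<omega> = m)
      else distributed P lborel X (\<lambda>x. ennreal (normal_density m (sqrt v) x)))"

text \<open>(F a)_{a in A} is a Gaussian vector with mean m and covariance C:
  every linear combination is Gaussian with the corresponding mean and variance.\<close>
definition gaussian_family :: "'a measure \<Rightarrow> 'i set \<Rightarrow> ('i \<Rightarrow> 'a \<Rightarrow> real) \<Rightarrow> ('i \<Rightarrow> real)
     \<Rightarrow> ('i \<Rightarrow> 'i \<Rightarrow> real) \<Rightarrow> bool" where
  "gaussian_family P A F m C \<longleftrightarrow> finite A \<and> (\<forall>c :: 'i \<Rightarrow> real.
      gaussian_rv P (\<lambda>\<omega>. \<Sum>a\<in>A. c a * F a \<omega>) (\<Sum>a\<in>A. c a * m a) (\<Sum>a\<in>A. \<Sum>b\<in>A. c a * c b * C a b))"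

end

theory Submission
  imports Defs "Jordan_Normal_Form.Determinant"
begin


lemma agg:
  fixes u :: "nat \<Rightarrow> real"
  assumes "finite B" "\<forall>l<n. p l \<in> B"
  shows "(\<Sum>b\<in>B. (\<Sum>l<n. if p l = b then u l else 0) * x b) = (\<Sum>l<n. u l * x (p l))"
proof -
  have "(\<Sum>b\<in>B. (\<Sum>l<n. if p l = b then u l else 0) * x b)
      = (\<Sum>b\<in>B. \<Sum>l<n. (if p l = b then u l * x b else 0))"
    by (auto simp: sum_distrib_right intro!: sum.cong)
  also have "\<dots> = (\<Sum>l<n. \<Sum>b\<in>B. (if p l = b then u l * x b else 0))"
    by (rule sum.swap)
  also have "\<dots> = (\<Sum>l<n. u l * x (p l))"
    using assms by (auto simp: sum.delta intro!: sum.cong)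
  finally show ?thesis .
qed

lemma qf_psd:
  fixes k :: "nat \<Rightarrow> nat \<Rightarrow> real"
  assumes k_psd: "\<forall>c :: nat \<Rightarrow> real. (\<Sum>z\<le>zmax. \<Sum>z'\<le>zmax. c z * c z' * k z z') \<ge> 0"
    and zs: "\<forall>a<n. zs ! a \<le> zmax"
  shows "(\<Sum>a<n. \<Sum>c<n. u a * u c * k (zs ! a) (zs ! c)) \<ge> 0"
proof -
  define w where "w z = (\<Sum>l<n. if zs ! l = z then u l else 0)" for z
  have 1: "(\<Sum>z\<le>zmax. \<Sum>z'\<le>zmax. w z * w z' * k z z') = (\<Sum>z\<le>zmax. w z * (\<Sum>c<n. u c * k z (zs ! c)))"
  proof (rule sum.cong[OF refl])
    fix z assume "z \<in> {..zmax}"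
    have "(\<Sum>z'\<le>zmax. w z * w z' * k z z') = w z * (\<Sum>z'\<le>zmax. w z' * k z z')"
      by (simp add: sum_distrib_left mult.assoc)
    also have "(\<Sum>z'\<le>zmax. w z' * k z z') = (\<Sum>c<n. u c * k z (zs ! c))"
      unfolding w_def by (rule agg) (use zs in auto)
    finally show "(\<Sum>z'\<le>zmax. w z * w z' * k z z') = w z * (\<Sum>c<n. u c * k z (zs ! c))" .
  qed
  also have "\<dots> = (\<Sum>a<n. u a * (\<Sum>c<n. u c * k (zs ! a) (zs ! c)))"
    unfolding w_def by (rule agg[where x="\<lambda>z. (\<Sum>c<n. u c * k z (zs ! c))"]) (use zs in auto)
  also have "\<dots> = (\<Sum>a<n. \<Sum>c<n. u a * u c * k (zs ! a) (zs ! c))"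
    by (simp add: sum_distrib_left mult.assoc)
  finally show ?thesis using k_psd by metis
qed

lemma gram_pd:
  fixes k :: "nat \<Rightarrow> nat \<Rightarrow> real"
  shows "(\<Sum>a<n. u a * (\<Sum>c<n. (k (zs ! a) (zs ! c) + (if a = c then s2 else 0)) * u c))
     = (\<Sum>a<n. \<Sum>c<n. u a * u c * k (zs ! a) (zs ! c)) + s2 * (\<Sum>a<n. (u a)^2)"
proof -
  have "u a * (\<Sum>c<n. (k (zs ! a) (zs ! c) + (if a = c then s2 else 0)) * u c)
     = (\<Sum>c<n. u a * u c * k (zs ! a) (zs ! c)) + s2 * (u a)^2" if "a < n" for a
  proof -
    have "u a * (\<Sum>c<n. (k (zs ! a) (zs ! c) + (if a = c then s2 else 0)) * u c)
       = (\<Sum>c<n. u a * u c * k (zs ! a) (zs ! c) + (if a = c then s2 * (u a)^2 else 0))"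
      by (auto simp: sum_distrib_left power2_eq_square algebra_simps intro!: sum.cong)
    also have "\<dots> = (\<Sum>c<n. u a * u c * k (zs ! a) (zs ! c)) + s2 * (u a)^2"
      using that by (simp add: sum.distrib sum.delta)
    finally show ?thesis .
  qed
  then show ?thesis by (simp add: sum.distrib sum_distrib_left)
qed

lemma gram_inv_ex:
  fixes k :: "nat \<Rightarrow> nat \<Rightarrow> real"
  assumes s2: "s2 > 0"
    and psd: "\<And>u. (\<Sum>a<length zs. \<Sum>c<length zs. u a * u c * k (zs ! a) (zs ! c)) \<ge> 0"
  shows "\<exists>W. \<forall>a<length zs. \<forall>b<length zs.
      (\<Sum>c<length zs. (k (zs ! a) (zs ! c) + (if a = c then s2 else 0)) * W c b)
        = (if a = b then 1 else 0)"
proof -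
  define n where "n = length zs"
  define A :: "real mat" where "A = mat n n (\<lambda>(a,c). k (zs ! a) (zs ! c) + (if a = c then s2 else 0))"
  have A: "A \<in> carrier_mat n n" unfolding A_def by simp
  have "det A \<noteq> 0"
  proof
    assume "det A = 0"
    then obtain v where v: "v \<in> carrier_vec n" "v \<noteq> 0\<^sub>v n" "A *\<^sub>v v = 0\<^sub>v n"
      using det_0_iff_vec_prod_zero[OF A] by blast
    have row0: "(\<Sum>c<n. (k (zs ! a) (zs ! c) + (if a = c then s2 else 0)) * v $ c) = 0" if "a < n" for a
    proof -
      have "(A *\<^sub>v v) $ a = 0" using v(3) that by simp
      moreover have "(A *\<^sub>v v) $ a = (\<Sum>c<n. (k (zs ! a) (zs ! c) + (if a = c then s2 else 0)) * v $ c)"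
        using that v(1) A unfolding A_def by (simp add: scalar_prod_def atLeast0LessThan)
      ultimately show ?thesis by simp
    qed
    have "(\<Sum>a<n. v $ a * (\<Sum>c<n. (k (zs ! a) (zs ! c) + (if a = c then s2 else 0)) * v $ c)) = 0"
      using row0 by simp
    then have "(\<Sum>a<n. \<Sum>c<n. v $ a * v $ c * k (zs ! a) (zs ! c)) + s2 * (\<Sum>a<n. (v $ a)^2) = 0"
      using gram_pd[where n=n and u="\<lambda>a. v $ a" and k=k and zs=zs] by simp
    moreover have "(\<Sum>a<n. \<Sum>c<n. v $ a * v $ c * k (zs ! a) (zs ! c)) \<ge> 0"
      using psd[of "\<lambda>a. v $ a"] unfolding n_def .
    moreover have "(\<Sum>a<n. (v $ a)^2) \<ge> 0" by (simp add: sum_nonneg)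
    ultimately have "s2 * (\<Sum>a<n. (v $ a)^2) = 0" using s2
      by (smt (verit) mult_nonneg_nonneg)
    then have "(\<Sum>a<n. (v $ a)^2) = 0" using s2 by simp
    then have "\<forall>a<n. (v $ a)^2 = 0"
      by (subst (asm) sum_nonneg_eq_0_iff) auto
    then have "v = 0\<^sub>v n" using v(1) by (intro eq_vecI) auto
    with v(2) show False by simp
  qed
  from det_non_zero_imp_unit[OF A this, unfolded Units_def, of "()"]
  obtain B where B: "B \<in> carrier_mat n n" and AB: "A * B = 1\<^sub>m n"
    by (auto simp: ring_mat_def)
  show ?thesis
  proof (intro exI allI impI)
    fix a b assume ab: "a < length zs" "b < length zs"
    have "(A * B) $$ (a, b) = (\<Sum>c<length zs. (k (zs ! a) (zs ! c) + (if a = c then s2 else 0)) * B $$ (c, b))"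
      using ab A B unfolding A_def n_def by (simp add: scalar_prod_def atLeast0LessThan)
    moreover have "(A * B) $$ (a, b) = (if a = b then 1 else 0)" using AB ab unfolding n_def by simp
    ultimately show "(\<Sum>c<length zs. (k (zs ! a) (zs ! c) + (if a = c then s2 else 0)) * B $$ (c, b))
        = (if a = b then 1 else 0)" by simp
  qed
qed

lemma post_cov_le:
  fixes k :: "nat \<Rightarrow> nat \<Rightarrow> real"
  assumes s2: "s2 > 0"
    and k_sym: "\<forall>z\<le>zmax. \<forall>z'\<le>zmax. k z z' = k z' z"
    and k_psd: "\<forall>c :: nat \<Rightarrow> real. (\<Sum>z\<le>zmax. \<Sum>z'\<le>zmax. c z * c z' * k z z') \<ge> 0"
    and obs: "\<forall>p\<in>set obs. fst p \<le> zmax"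
    and z: "z \<le> zmax"
  shows "post_cov k s2 obs z z \<le> k z z"
proof -
  define zs where "zs = map fst obs"
  define n where "n = length obs"
  have nz: "length zs = n" unfolding zs_def n_def by simp
  have zsr: "\<forall>a<n. zs ! a \<le> zmax" using obs unfolding zs_def n_def by (auto)
  define W where "W = gram_inv k s2 zs"
  have "\<exists>W. \<forall>a<length zs. \<forall>b<length zs.
      (\<Sum>c<length zs. (k (zs ! a) (zs ! c) + (if a = c then s2 else 0)) * W c b)
        = (if a = b then 1 else 0)"
    by (rule gram_inv_ex[OF s2]) (rule qf_psd[OF k_psd], use zsr nz in auto)
  then have W: "\<forall>a<n. \<forall>b<n.
      (\<Sum>c<n. (k (zs ! a) (zs ! c) + (if a = c then s2 else 0)) * W c b)
        = (if a = b then 1 else 0)"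
    unfolding W_def gram_inv_def nz by (rule someI_ex)
  define v where "v a = k (zs ! a) z" for a
  define u where "u c = (\<Sum>b<n. W c b * v b)" for c
  have Au: "(\<Sum>c<n. (k (zs ! a) (zs ! c) + (if a = c then s2 else 0)) * u c) = v a" if "a < n" for a
  proof -
    have "(\<Sum>c<n. (k (zs ! a) (zs ! c) + (if a = c then s2 else 0)) * u c)
       = (\<Sum>b<n. (\<Sum>c<n. (k (zs ! a) (zs ! c) + (if a = c then s2 else 0)) * W c b) * v b)"
    proof -
      have "(\<Sum>c<n. (k (zs ! a) (zs ! c) + (if a = c then s2 else 0)) * u c)
        = (\<Sum>c<n. \<Sum>b<n. (k (zs ! a) (zs ! c) + (if a = c then s2 else 0)) * W c b * v b)"
        unfolding u_def by (simp add: sum_distrib_left mult.assoc)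
      also have "\<dots> = (\<Sum>b<n. \<Sum>c<n. (k (zs ! a) (zs ! c) + (if a = c then s2 else 0)) * W c b * v b)"
        by (rule sum.swap)
      also have "\<dots> = (\<Sum>b<n. (\<Sum>c<n. (k (zs ! a) (zs ! c) + (if a = c then s2 else 0)) * W c b) * v b)"
        by (simp add: sum_distrib_right)
      finally show ?thesis .
    qed
    also have "\<dots> = (\<Sum>b<n. (if a = b then v b else 0))"
      using W that by (intro sum.cong) auto
    also have "\<dots> = v a" using that by (simp add: sum.delta)
    finally show ?thesis .
  qed
  have "(\<Sum>a<n. \<Sum>b<n. k z (zs ! a) * W a b * k (zs ! b) z) = (\<Sum>a<n. v a * u a)"
    unfolding u_def v_def using k_sym zsr z
    by (auto simp: sum_distrib_left mult.assoc intro!: sum.cong)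
  also have "\<dots> = (\<Sum>a<n. u a * (\<Sum>c<n. (k (zs ! a) (zs ! c) + (if a = c then s2 else 0)) * u c))"
    using Au by (auto intro!: sum.cong)
  also have "\<dots> = (\<Sum>a<n. \<Sum>c<n. u a * u c * k (zs ! a) (zs ! c)) + s2 * (\<Sum>a<n. (u a)^2)"
    by (rule gram_pd)
  also have "\<dots> \<ge> 0"
    using qf_psd[OF k_psd zsr, of u] s2 by (simp add: sum_nonneg)
  finally have "(\<Sum>a<n. \<Sum>b<n. k z (zs ! a) * W a b * k (zs ! b) z) \<ge> 0" .
  then show ?thesis unfolding post_cov_def Let_def zs_def[symmetric] n_def[symmetric] W_def[symmetric]
    by simp
qed

lemma nd_shift:
  assumes "\<sigma> > 0"
  shows "normal_density m \<sigma> x * exp (l * (x - m)) = exp (l^2 * \<sigma>^2 / 2) * normal_density (m + l * \<sigma>^2) \<sigma> x"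
proof -
  have "-(x - m)\<^sup>2/ (2 * \<sigma>\<^sup>2) + l * (x - m) = l^2 * \<sigma>^2 / 2 + (-(x - (m + l * \<sigma>^2))\<^sup>2/ (2 * \<sigma>\<^sup>2))"
    using assms by (simp add: field_simps power2_eq_square)
  then have "exp (-(x - m)\<^sup>2/ (2 * \<sigma>\<^sup>2)) * exp (l * (x - m)) = exp (l^2 * \<sigma>^2 / 2) * exp (-(x - (m + l * \<sigma>^2))\<^sup>2/ (2 * \<sigma>\<^sup>2))"
    by (simp add: exp_add[symmetric])
  then show ?thesis unfolding normal_density_def by (simp add: algebra_simps)
qed

lemma pos_exp_bound:
  fixes y l :: real
  assumes "l > 0"
  shows "max 0 y \<le> exp (l * y - 1) / l"
proof -
  have "l * y \<le> exp (l * y - 1)" using exp_ge_add_one_self[of "l * y - 1"] by simp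
  then have "y \<le> exp (l * y - 1) / l" using assms by (simp add: field_simps)
  moreover have "0 \<le> exp (l * y - 1) / l" using assms by simp
  ultimately show ?thesis by simp
qed

lemma gauss_mean:
  assumes P: "prob_space P" and G: "gaussian_rv P X m v"
  shows "integrable P X \<and> (\<integral>\<omega>. X \<omega> \<partial>P) = m"
proof (cases "v = 0")
  case True
  interpret prob_space P by fact
  have AE: "AE \<omega> in P. X \<omega> = m" and X: "X \<in> borel_measurable P" using G True unfolding gaussian_rv_def by auto
  have "integrable P (\<lambda>\<omega>. m)" by simp
  then have "integrable P X" using integrable_cong_AE[OF X _ AE] by simp
  moreover have "(\<integral>\<omega>. X \<omega> \<partial>P) = (\<integral>\<omega>. m \<partial>P)" by (rule integral_cong_AE[OF X _ AE]) simp
  ultimately show ?thesis by (simp add: prob_space)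
next
  case False
  interpret prob_space P by fact
  have v: "v > 0" using G False unfolding gaussian_rv_def by auto
  have D: "distributed P lborel X (\<lambda>x. ennreal (normal_density m (sqrt v) x))"
    using G False unfolding gaussian_rv_def by auto
  have "integrable P X"
    using distributed_integrable_var[OF D] integrable_normal_moment_nz_1[of "sqrt v" m] v by simp
  moreover have "expectation X = m" using normal_distributed_expectation[of "sqrt v" X m] D v by simp
  ultimately show ?thesis by simp
qed

lemma gauss_tail:
  assumes P: "prob_space P" and G: "gaussian_rv P X m v" and a: "\<alpha> > 0"
  shows "integrable P (\<lambda>\<omega>. max 0 (X \<omega> - (m + \<alpha> * sqrt v)))
    \<and> (\<integral>\<omega>. max 0 (X \<omega> - (m + \<alpha> * sqrt v)) \<partial>P) \<le> sqrt v * exp (-(\<alpha>^2)/2) / (exp 1 * \<alpha>)"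
proof (cases "v = 0")
  case True
  interpret prob_space P by fact
  have AE: "AE \<omega> in P. X \<omega> = m" and X: "X \<in> borel_measurable P" using G True unfolding gaussian_rv_def by auto
  have AE2: "AE \<omega> in P. max 0 (X \<omega> - (m + \<alpha> * sqrt v)) = 0" using AE True by auto
  have M: "(\<lambda>\<omega>. max 0 (X \<omega> - (m + \<alpha> * sqrt v))) \<in> borel_measurable P" using X by measurable
  have "integrable P (\<lambda>\<omega>. max 0 (X \<omega> - (m + \<alpha> * sqrt v)))"
    using integrable_cong_AE[OF M _ AE2] by simp
  moreover have "(\<integral>\<omega>. max 0 (X \<omega> - (m + \<alpha> * sqrt v)) \<partial>P) = (\<integral>\<omega>. 0 \<partial>P)"
    by (rule integral_cong_AE[OF M _ AE2]) simp
  ultimately show ?thesis using True by simp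
next
  case False
  interpret prob_space P by fact
  have v: "v > 0" using G False unfolding gaussian_rv_def by auto
  define \<sigma> where "\<sigma> = sqrt v"
  have s: "\<sigma> > 0" using v unfolding \<sigma>_def by simp
  define l where "l = \<alpha> / \<sigma>"
  have l: "l > 0" using s a unfolding l_def by simp
  define c where "c = m + \<alpha> * \<sigma>"
  have D: "distributed P lborel X (\<lambda>x. ennreal (normal_density m \<sigma> x))"
    using G False unfolding gaussian_rv_def \<sigma>_def by auto
  define g where "g x = max 0 (x - c)" for x :: real
  define C where "C = exp (l^2 * \<sigma>^2 / 2) * exp (- l * c - 1) / l * exp (l * m)"
  have bnd: "normal_density m \<sigma> x * g x \<le> C * normal_density (m + l * \<sigma>^2) \<sigma> x" for x
  proof -
    have "g x \<le> exp (l * (x - c) - 1) / l" unfolding g_def by (rule pos_exp_bound[OF l])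
    also have "\<dots> = exp (l * (x - m)) * (exp (- l * c - 1) / l * exp (l * m))"
    proof -
      have "exp (l * (x - c) - 1) = exp (l * (x - m) + (- l * c - 1) + l * m)"
        by (rule arg_cong[where f=exp]) (simp add: algebra_simps)
      also have "\<dots> = exp (l * (x - m)) * exp (- l * c - 1) * exp (l * m)" by (simp only: exp_add)
      finally show ?thesis by simp
    qed
    finally have "normal_density m \<sigma> x * g x \<le> normal_density m \<sigma> x * exp (l * (x - m)) * (exp (- l * c - 1) / l * exp (l * m))"
      by (metis mult_left_mono normal_density_nonneg mult.assoc)
    also have "\<dots> = C * normal_density (m + l * \<sigma>^2) \<sigma> x"
      unfolding nd_shift[OF s] C_def by (simp add: algebra_simps)
    finally show ?thesis .
  qed
  have gm: "g \<in> borel_measurable lborel" unfolding g_def by measurable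
  have intB: "integrable lborel (\<lambda>x. C * normal_density (m + l * \<sigma>^2) \<sigma> x)" using s by simp
  have intA: "integrable lborel (\<lambda>x. normal_density m \<sigma> x * g x)"
  proof (rule Bochner_Integration.integrable_bound[OF intB])
    show "(\<lambda>x. normal_density m \<sigma> x * g x) \<in> borel_measurable lborel" using gm by measurable
    show "AE x in lborel. norm (normal_density m \<sigma> x * g x) \<le> norm (C * normal_density (m + l * \<sigma>^2) \<sigma> x)"
    proof (rule AE_I2)
      fix x
      have "0 \<le> normal_density m \<sigma> x * g x" unfolding g_def by simp
      then show "norm (normal_density m \<sigma> x * g x) \<le> norm (C * normal_density (m + l * \<sigma>^2) \<sigma> x)"
        using bnd[of x] by simp
    qed
  qed
  have I1: "integrable P (\<lambda>\<omega>. g (X \<omega>))"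
    using distributed_integrable[OF D gm] intA by simp
  have I2: "(\<integral>\<omega>. g (X \<omega>) \<partial>P) = (\<integral>x. normal_density m \<sigma> x * g x \<partial>lborel)"
    using distributed_integral[OF D gm] by simp
  also have "\<dots> \<le> (\<integral>x. C * normal_density (m + l * \<sigma>^2) \<sigma> x \<partial>lborel)"
    by (rule Bochner_Integration.integral_mono[OF intA intB bnd])
  also have "\<dots> = C" using s by simp
  also have "C = \<sigma> * exp (-(\<alpha>^2)/2) / (exp 1 * \<alpha>)"
  proof -
    have "C = exp (l^2 * \<sigma>^2 / 2 + (- l * c - 1) + l * m) / l"
      unfolding C_def by (simp add: exp_add)
    also have "l^2 * \<sigma>^2 / 2 + (- l * c - 1) + l * m = -(\<alpha>^2)/2 - 1"
      unfolding l_def c_def using s by (simp add: field_simps power2_eq_square)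
    also have "exp (-(\<alpha>^2)/2 - 1) / l = \<sigma> * exp (-(\<alpha>^2)/2) / (exp 1 * \<alpha>)"
      unfolding l_def using s a by (simp only: exp_diff) (simp add: field_simps)
    finally show ?thesis .
  qed
  finally show ?thesis using I1 unfolding g_def c_def \<sigma>_def by simp
qed

lemma upd_le: "upd zmax j Z i \<le> zmax"
  unfolding upd_def by auto

lemma state_at_le: "(\<forall>j<K. Z1 j \<le> zmax) \<Longrightarrow> j < K \<Longrightarrow> state_at zmax Z1 J n j \<le> zmax"
  by (cases n) (auto simp: upd_le)

lemma length_zseq[simp]: "length (zseq zmax Z js) = length js"
  by (induction js arbitrary: Z) auto

lemma zseq_le: "(\<forall>j<K. Z j \<le> zmax) \<Longrightarrow> set js \<subseteq> {..<K} \<Longrightarrow> l < length js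
   \<Longrightarrow> zseq zmax Z js ! l \<le> zmax"
proof (induction js arbitrary: Z l)
  case Nil then show ?case by simp
next
  case (Cons j js)
  show ?case
  proof (cases l)
    case 0 then show ?thesis using Cons.prems by auto
  next
    case (Suc l')
    have "zseq zmax (upd zmax j Z) js ! l' \<le> zmax"
      by (rule Cons.IH) (use Cons.prems Suc upd_le in auto)
    then show ?thesis using Suc by simp
  qed
qed

lemma agg2:
  fixes u :: "nat \<Rightarrow> real"
  assumes "finite A" "\<forall>l<n. p l \<in> A"
  shows "(\<Sum>a\<in>A. \<Sum>b\<in>A. (\<Sum>l<n. if p l = a then u l else 0) * (\<Sum>l<n. if p l = b then u l else 0) * C a b)
    = (\<Sum>l<n. \<Sum>q<n. u l * u q * C (p l) (p q))"
proof -
  define cu where "cu a = (\<Sum>l<n. if p l = a then u l else 0)" for a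
  have "(\<Sum>a\<in>A. \<Sum>b\<in>A. cu a * cu b * C a b) = (\<Sum>a\<in>A. cu a * (\<Sum>b\<in>A. cu b * C a b))"
    by (simp add: sum_distrib_left mult.assoc)
  also have "\<dots> = (\<Sum>a\<in>A. cu a * (\<Sum>q<n. u q * C a (p q)))"
    unfolding cu_def using agg[OF assms] by simp
  also have "\<dots> = (\<Sum>l<n. u l * (\<Sum>q<n. u q * C (p l) (p q)))"
    unfolding cu_def by (rule agg[OF assms, where x="\<lambda>a. (\<Sum>q<n. u q * C a (p q))"])
  also have "\<dots> = (\<Sum>l<n. \<Sum>q<n. u l * u q * C (p l) (p q))"
    by (simp add: sum_distrib_left mult.assoc)
  finally show ?thesis unfolding cu_def .
qed

lemma var_bound:
  fixes C :: "'i \<Rightarrow> 'i \<Rightarrow> real"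
  assumes psd: "\<And>u (p :: nat \<Rightarrow> 'i). (\<forall>l<2. p l \<in> A) \<Longrightarrow> (\<Sum>l<2. \<Sum>q<2. u l * u q * C (p l) (p q)) \<ge> 0"
    and p: "\<forall>l<n. p l \<in> A"
  shows "(\<Sum>l<n. \<Sum>q<n. C (p l) (p q)) \<le> real n * (\<Sum>l<n. C (p l) (p l))"
proof -
  have pair: "C (p l) (p l) + C (p q) (p q) - C (p l) (p q) - C (p q) (p l) \<ge> 0" if "l < n" "q < n" for l q
  proof -
    let ?p = "\<lambda>r::nat. if r = 0 then p l else p q"
    let ?u = "\<lambda>r::nat. if r = 0 then (1::real) else -1"
    have "(\<Sum>r<2. \<Sum>s<2. ?u r * ?u s * C (?p r) (?p s)) \<ge> 0"
      by (rule psd) (use p that in auto)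
    then show ?thesis by (simp add: numeral_2_eq_2)
  qed
  have "0 \<le> (\<Sum>l<n. \<Sum>q<n. C (p l) (p l) + C (p q) (p q) - C (p l) (p q) - C (p q) (p l))"
    using pair by (intro sum_nonneg) auto
  also have "\<dots> = real n * (\<Sum>l<n. C (p l) (p l)) + real n * (\<Sum>l<n. C (p l) (p l))
      - (\<Sum>l<n. \<Sum>q<n. C (p l) (p q)) - (\<Sum>l<n. \<Sum>q<n. C (p q) (p l))"
    by (simp add: sum_subtractf sum.distrib sum_distrib_left)
  also have "(\<Sum>l<n. \<Sum>q<n. C (p q) (p l)) = (\<Sum>l<n. \<Sum>q<n. C (p l) (p q))"
    by (rule sum.swap)
  finally show ?thesis by simp
qed

lemma final_arith:
  fixes K zmax d T cL :: nat and \<alpha> :: real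
  assumes K: "K \<ge> 2" and d: "d \<ge> 1" and T: "T \<ge> 1" and cL: "cL \<le> K ^ d"
    and a: "\<alpha> = sqrt (2 * ln (real ((K * (zmax + 1)) ^ d) * real (T ^ 2)))"
  shows "\<alpha> > 0 \<and> real cL * (real d * exp (-(\<alpha>^2)/2) / (exp 1 * \<alpha>)) \<le> sqrt (2 * real d * pi) / real (T ^ 2)"
proof -
  define N where "N = real ((K * (zmax + 1)) ^ d) * real (T ^ 2)"
  have KN: "real (K ^ d) * real (T ^ 2) \<le> N"
    unfolding N_def by (intro mult_right_mono) (auto simp: power_mono)
  have "2 ^ d \<le> K ^ d" using K by (simp add: power_mono)
  then have N2a: "real (2 ^ d) \<le> real (K ^ d)" by (simp only: of_nat_le_iff)
  have "(1::real) \<le> real (T ^ 2)" using T by simp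
  then have "real (K ^ d) \<le> real (K ^ d) * real (T ^ 2)"
    by (simp add: mult_le_cancel_left1)
  then have N2: "real (2 ^ d) \<le> N" using N2a KN by linarith
  have "(0::real) < real (2 ^ d)" by simp
  then have Npos: "N > 0" using N2 by linarith
  have lnN: "ln N \<ge> real d * ln 2"
    using N2 ln_le_cancel_iff[of "2 ^ d" N] Npos by (simp add: ln_realpow)
  have "real d * ln 2 \<ge> real d * (2/3)" by (rule mult_left_mono) (use ln2_ge_two_thirds in auto)
  then have "real d * ln 2 \<ge> real d / 2" by linarith
  then have lnN2: "2 * ln N \<ge> real d" using lnN by simp
  have a2: "\<alpha>^2 = 2 * ln N" unfolding a N_def[symmetric] using lnN2 by simp
  have apos: "\<alpha> > 0" unfolding a N_def[symmetric] using lnN2 d by simp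
  have ad: "\<alpha> \<ge> sqrt (real d)" unfolding a N_def[symmetric] using lnN2 by simp
  have ex: "exp (-(\<alpha>^2)/2) = 1 / N" unfolding a2 using Npos by (simp add: exp_minus exp_ln inverse_eq_divide)
  have "real cL * (real d * exp (-(\<alpha>^2)/2) / (exp 1 * \<alpha>)) = real cL * real d / (N * exp 1 * \<alpha>)"
    unfolding ex by (simp add: field_simps)
  also have "\<dots> \<le> real (K ^ d) * real d / (N * exp 1 * \<alpha>)"
    using cL Npos apos by (intro divide_right_mono mult_right_mono) auto
  also have "\<dots> \<le> real d / (real (T^2) * exp 1 * \<alpha>)"
  proof -
    have h: "real d * (real (K ^ d) * real (T^2)) \<le> real d * N"
      using mult_left_mono[OF KN, of "real d"] by simp
    then show ?thesis using Npos apos T by (simp add: divide_simps) (simp add: mult_ac)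
  qed
  also have "\<dots> \<le> sqrt (2 * real d * pi) / real (T ^ 2)"
  proof -
    have "real d / (exp 1 * \<alpha>) \<le> real d / sqrt (real d)"
    proof (rule divide_left_mono)
      have "sqrt (real d) \<le> \<alpha>" by (rule ad)
      also have "\<alpha> \<le> exp 1 * \<alpha>"
      proof -
        have "(1::real) \<le> exp 1" by simp
        then show ?thesis using apos by (simp add: mult_le_cancel_right1)
      qed
      finally show "sqrt (real d) \<le> exp 1 * \<alpha>" .
    qed (use d apos in auto)
    also have "real d / sqrt (real d) = sqrt (real d)" using d by (simp add: real_div_sqrt)
    also have "sqrt (real d) \<le> sqrt (2 * real d * pi)"
    proof (intro real_sqrt_le_mono)
      have "real d * 1 \<le> real d * (2 * pi)" using pi_gt3 by (intro mult_left_mono) auto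
      then show "real d \<le> 2 * real d * pi" by (simp add: mult_ac)
    qed
    finally have "real d / (exp 1 * \<alpha>) \<le> sqrt (2 * real d * pi)" .
    then show ?thesis using T by (simp add: divide_simps mult.commute mult.left_commute)
  qed
  finally show ?thesis using apos by simp
qed



theorem mainTheorem9:
  fixes K zmax d t :: nat
    and sp :: bool
    and k :: "nat \<Rightarrow> nat \<Rightarrow> real"
    and s2 :: real
    and Z1 :: "nat \<Rightarrow> nat"
    and J :: "nat \<Rightarrow> nat"
    and Y :: "nat \<Rightarrow> real"
    and I :: "nat list"
    and P :: "'a measure"
    and F :: "nat \<times> nat \<Rightarrow> 'a \<Rightarrow> real"
  assumes K_pos: "K \<ge> 1"
    and d_pos: "d \<ge> 1"
    and single_d: "sp \<longrightarrow> d \<le> K"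
    and s2_pos: "s2 > 0"
    and k_sym: "\<forall>z\<le>zmax. \<forall>z'\<le>zmax. k z z' = k z' z"
    and k_psd: "\<forall>c :: nat \<Rightarrow> real. (\<Sum>z\<le>zmax. \<Sum>z'\<le>zmax. c z * c z' * k z z') \<ge> 0"
    and k_diag: "\<forall>z\<le>zmax. k z z \<le> 1"
    and Z1_range: "\<forall>j<K. Z1 j \<le> zmax"
    and block_start: "\<exists>m. t = m * d + 1"
    and past_blocks: "\<forall>m. m * d + 1 < t \<longrightarrow>
          map (\<lambda>l. J (m * d + 1 + l)) [0..<d] \<in> leaves sp K d \<and>
          (\<forall>i \<in> leaves sp K d.
             ucb k s2 K zmax d Z1 J Y (m * d + 1) i
               \<le> ucb k s2 K zmax d Z1 J Y (m * d + 1) (map (\<lambda>l. J (m * d + 1 + l)) [0..<d]))"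
    and I_leaf: "I \<in> leaves sp K d"
    and I_max: "\<forall>i \<in> leaves sp K d. ucb k s2 K zmax d Z1 J Y t i \<le> ucb k s2 K zmax d Z1 J Y t I"
    and P_prob: "prob_space P"
    and posterior: "gaussian_family P ({..<K} \<times> {..zmax}) F
          (\<lambda>(j, z). post_mean k s2 (obs_of zmax Z1 J Y j t) z)
          (\<lambda>(j, z) (j', z'). if j = j' then post_cov k s2 (obs_of zmax Z1 J Y j t) z z' else 0)"
  shows "integrable P (\<lambda>\<omega>.
            best_value zmax (leaves sp K d) (\<lambda>j z. F (j, z) \<omega>) (state_at zmax Z1 J (t - 1))
          - leaf_value zmax (\<lambda>j z. F (j, z) \<omega>) (state_at zmax Z1 J (t - 1)) I)
      \<and> (\<integral>\<omega>. best_value zmax (leaves sp K d) (\<lambda>j z. F (j, z) \<omega>) (state_at zmax Z1 J (t - 1))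
            - leaf_value zmax (\<lambda>j z. F (j, z) \<omega>) (state_at zmax Z1 J (t - 1)) I \<partial>P)
        \<le> sqrt (2 * real d * pi) / real ((t + d - 1) ^ 2)
           + alpha K zmax d t * sqrt (varsig2 k s2 zmax Z1 J Y t I)"
proof -
  interpret prob_space P by (rule P_prob)
  define Zt where "Zt = state_at zmax Z1 J (t - 1)"
  define L where "L = leaves sp K d"
  define A where "A = {..<K} \<times> {..zmax}"
  define mf where "mf = (\<lambda>(j, z). post_mean k s2 (obs_of zmax Z1 J Y j t) z)"
  define C where "C = (\<lambda>(j, z) (j', z'). if j = j' then post_cov k s2 (obs_of zmax Z1 J Y j t) z z' else (0::real))"
  define eta' where "eta' = eta k s2 zmax Z1 J Y t"
  define vs where "vs = varsig2 k s2 zmax Z1 J Y t"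
  have finA: "finite A" unfolding A_def by simp
  have grv: "gaussian_rv P (\<lambda>\<omega>. \<Sum>a\<in>A. c a * F a \<omega>) (\<Sum>a\<in>A. c a * mf a) (\<Sum>a\<in>A. \<Sum>b\<in>A. c a * c b * C a b)" for c
    using posterior unfolding gaussian_family_def A_def mf_def C_def by blast
  define Mv where "Mv js \<omega> = leaf_value zmax (\<lambda>j z. F (j, z) \<omega>) Zt js" for js \<omega>
  define pp where "pp js l = (js ! l, zseq zmax Zt js ! l)" for js l
  have Zt_le: "\<forall>j<K. Zt j \<le> zmax" unfolding Zt_def using state_at_le Z1_range by blast
  have Lchar: "js \<in> L \<Longrightarrow> length js = d \<and> set js \<subseteq> {..<K}" for js
    unfolding L_def leaves_def by auto
  have ppA: "\<forall>l<d. pp js l \<in> A" if "js \<in> L" for js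
    using Lchar[OF that] zseq_le[OF Zt_le] unfolding pp_def A_def
    by (auto simp: subset_iff nth_mem)
  have Lsub: "L \<subseteq> {xs. set xs \<subseteq> {..<K} \<and> length xs = d}" unfolding L_def leaves_def by auto
  have finL: "finite L" by (rule finite_subset[OF Lsub finite_lists_length_eq]) simp
  have cardL: "card L \<le> K ^ d"
    using card_mono[OF finite_lists_length_eq Lsub] card_lists_length_eq[of "{..<K}" d] by simp
  have IL: "I \<in> L" using I_leaf unfolding L_def .
  have Mv_eq: "Mv js = (\<lambda>\<omega>. \<Sum>a\<in>A. (\<Sum>l<d. if pp js l = a then 1 else 0) * F a \<omega>)" if "js \<in> L" for js
  proof
    fix \<omega>
    have "(\<Sum>a\<in>A. (\<Sum>l<d. if pp js l = a then 1 else 0) * F a \<omega>) = (\<Sum>l<d. 1 * F (pp js l) \<omega>)"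
      using agg[OF finA ppA[OF that], where u="\<lambda>_. 1" and x="\<lambda>a. F a \<omega>"] by simp
    then show "Mv js \<omega> = (\<Sum>a\<in>A. (\<Sum>l<d. if pp js l = a then 1 else 0) * F a \<omega>)"
      unfolding Mv_def leaf_value_def pp_def using Lchar[OF that] by simp
  qed
  have leafG: "gaussian_rv P (Mv js) (eta' js) (vs js)" if "js \<in> L" for js
  proof -
    have m: "(\<Sum>a\<in>A. (\<Sum>l<d. if pp js l = a then 1 else 0) * mf a) = eta' js"
    proof -
      have "(\<Sum>a\<in>A. (\<Sum>l<d. if pp js l = a then 1 else 0) * mf a) = (\<Sum>l<d. 1 * mf (pp js l))"
        using agg[OF finA ppA[OF that], where u="\<lambda>_. 1" and x="mf"] by simp
      then show ?thesis unfolding eta'_def eta_def Let_def mf_def pp_def Zt_def[symmetric]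
        using Lchar[OF that] by simp
    qed
    have v: "(\<Sum>a\<in>A. \<Sum>b\<in>A. (\<Sum>l<d. if pp js l = a then 1 else 0) * (\<Sum>l<d. if pp js l = b then 1 else 0) * C a b) = vs js"
    proof -
      have "(\<Sum>a\<in>A. \<Sum>b\<in>A. (\<Sum>l<d. if pp js l = a then 1 else 0) * (\<Sum>l<d. if pp js l = b then 1 else 0) * C a b)
          = (\<Sum>l<d. \<Sum>q<d. 1 * 1 * C (pp js l) (pp js q))"
        using agg2[OF finA ppA[OF that], where u="\<lambda>_. 1" and C=C] by simp
      then show ?thesis unfolding vs_def varsig2_def Let_def C_def pp_def Zt_def[symmetric]
        using Lchar[OF that] by simp
    qed
    show ?thesis using grv[of "\<lambda>a. (\<Sum>l<d. if pp js l = a then 1 else 0)"] unfolding m v Mv_eq[OF that] .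
  qed
  have psd: "(\<Sum>l<n. \<Sum>q<n. u l * u q * C (p l) (p q)) \<ge> 0" if "\<forall>l<n. p l \<in> A" for n :: nat and u p
  proof -
    have "gaussian_rv P (\<lambda>\<omega>. \<Sum>a\<in>A. (\<Sum>l<n. if p l = a then u l else 0) * F a \<omega>) (\<Sum>a\<in>A. (\<Sum>l<n. if p l = a then u l else 0) * mf a)
      (\<Sum>a\<in>A. \<Sum>b\<in>A. (\<Sum>l<n. if p l = a then u l else 0) * (\<Sum>l<n. if p l = b then u l else 0) * C a b)"
      by (rule grv)
    then have "(\<Sum>a\<in>A. \<Sum>b\<in>A. (\<Sum>l<n. if p l = a then u l else 0) * (\<Sum>l<n. if p l = b then u l else 0) * C a b) \<ge> 0"
      unfolding gaussian_rv_def by blast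
    then show ?thesis using agg2[OF finA that, of u C] by simp
  qed
  have obs_le: "\<forall>p\<in>set (obs_of zmax Z1 J Y j t). fst p \<le> zmax" if "j < K" for j
    unfolding obs_of_def using state_at_le[OF Z1_range that] by auto
  have vs_le: "vs js \<le> real d * real d" if "js \<in> L" for js
  proof -
    have "vs js = (\<Sum>l<d. \<Sum>q<d. C (pp js l) (pp js q))"
      unfolding vs_def varsig2_def Let_def C_def pp_def Zt_def[symmetric]
      using Lchar[OF that] by simp
    also have "\<dots> \<le> real d * (\<Sum>l<d. C (pp js l) (pp js l))"
      by (rule var_bound[OF _ ppA[OF that]]) (rule psd)
    also have "\<dots> \<le> real d * (\<Sum>l<d. 1)"
    proof (intro mult_left_mono sum_mono)
      fix l assume l: "l \<in> {..<d}"
      have jK: "js ! l < K" and zle: "zseq zmax Zt js ! l \<le> zmax"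
        using Lchar[OF that] l zseq_le[OF Zt_le] by (auto simp: subset_iff nth_mem)
      have "C (pp js l) (pp js l) = post_cov k s2 (obs_of zmax Z1 J Y (js ! l) t) (zseq zmax Zt js ! l) (zseq zmax Zt js ! l)"
        unfolding C_def pp_def by simp
      also have "\<dots> \<le> k (zseq zmax Zt js ! l) (zseq zmax Zt js ! l)"
        by (rule post_cov_le[OF s2_pos k_sym k_psd obs_le[OF jK] zle])
      also have "\<dots> \<le> 1" using k_diag zle by blast
      finally show "C (pp js l) (pp js l) \<le> 1" .
    qed simp
    finally show ?thesis by simp
  qed
  have sig_le: "sqrt (vs js) \<le> real d" if "js \<in> L" for js
  proof -
    have "sqrt (vs js) \<le> sqrt (real d * real d)" using vs_le[OF that] by (rule real_sqrt_le_mono)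
    also have "\<dots> = real d" by simp
    finally show ?thesis .
  qed
  have Mv_meas: "Mv js \<in> borel_measurable P" if "js \<in> L" for js
    using leafG[OF that] unfolding gaussian_rv_def by blast
  define D where "D \<omega> = Max ((\<lambda>js. Mv js \<omega>) ` L) - Mv I \<omega>" for \<omega>
  have goal_eq: "(\<lambda>\<omega>. best_value zmax (leaves sp K d) (\<lambda>j z. F (j, z) \<omega>) (state_at zmax Z1 J (t - 1))
          - leaf_value zmax (\<lambda>j z. F (j, z) \<omega>) (state_at zmax Z1 J (t - 1)) I) = D"
    unfolding D_def best_value_def Mv_def Zt_def L_def by simp
  have D_meas: "D \<in> borel_measurable P"
    unfolding D_def using Mv_meas IL finL by measurable
  have Dnn: "D \<omega> \<ge> 0" for \<omega>
    unfolding D_def using IL finL by (simp add: Max_ge)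
  have rhs_nn: "0 \<le> sqrt (2 * real d * pi) / real ((t + d - 1) ^ 2) + alpha K zmax d t * sqrt (vs I)"
  proof -
    have vsI: "vs I \<ge> 0" using leafG[OF IL] unfolding gaussian_rv_def by blast
    have a1: "1 \<le> K * (zmax + 1)" using K_pos by simp
    have b1: "1 \<le> t + d - 1" using d_pos block_start by auto
    have "(1::real) \<le> real (K * (zmax + 1)) ^ d"
      using a1 by (intro one_le_power) (metis of_nat_1 of_nat_le_iff)
    moreover have "(1::real) \<le> real (t + d - 1) ^ 2"
      using b1 by (intro one_le_power) (metis of_nat_1 of_nat_le_iff)
    ultimately have "(1::real) \<le> real (K * (zmax + 1)) ^ d * real (t + d - 1) ^ 2"
      by (metis mult_mono' mult_1 zero_le_one)
    then have "(1::real) \<le> real ((K * (zmax + 1)) ^ d) * real ((t + d - 1) ^ 2)"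
      by (simp only: of_nat_power)
    then have "alpha K zmax d t \<ge> 0" unfolding alpha_def by simp
    then show ?thesis using vsI by simp
  qed
  have main: "integrable P D \<and> integral\<^sup>L P D \<le> sqrt (2 * real d * pi) / real ((t + d - 1) ^ 2) + alpha K zmax d t * sqrt (vs I)"
  proof (cases "K = 1")
    case True
    have allI': "js = I" if "js \<in> L" for js
    proof -
      have "length js = d" "set js \<subseteq> {0}" "length I = d" "set I \<subseteq> {0}"
        using Lchar[OF that] Lchar[OF IL] True by auto
      then show ?thesis by (intro nth_equalityI) (auto simp: subset_iff nth_mem, metis nth_mem singletonD)
    qed
    have "L = {I}" using allI' IL by blast
    then have D0: "D = (\<lambda>_. 0)" unfolding D_def by auto
    show ?thesis unfolding D0 using rhs_nn by simp
  next
    case False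
    define \<alpha> where "\<alpha> = alpha K zmax d t"
    have b1: "1 \<le> t + d - 1" using d_pos block_start by auto
    have fa: "\<alpha> > 0 \<and> real (card L) * (real d * exp (-(\<alpha>^2)/2) / (exp 1 * \<alpha>)) \<le> sqrt (2 * real d * pi) / real ((t + d - 1) ^ 2)"
      by (rule final_arith[where K=K and zmax=zmax and T="t+d-1"])
        (use False K_pos d_pos b1 cardL in \<open>auto simp: \<alpha>_def alpha_def\<close>)
    then have apos: "\<alpha> > 0" by simp
    define E where "E = exp (-(\<alpha>^2)/2) / (exp 1 * \<alpha>)"
    have E0: "E \<ge> 0" unfolding E_def using apos by simp
    define pos where "pos js \<omega> = max 0 (Mv js \<omega> - (eta' js + \<alpha> * sqrt (vs js)))" for js \<omega>
    have tail: "integrable P (pos js) \<and> integral\<^sup>L P (pos js) \<le> sqrt (vs js) * exp (-(\<alpha>^2)/2) / (exp 1 * \<alpha>)"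
      if "js \<in> L" for js
      using gauss_tail[OF P_prob leafG[OF that] apos] unfolding pos_def by simp
    have MI: "integrable P (Mv I) \<and> integral\<^sup>L P (Mv I) = eta' I"
      using gauss_mean[OF P_prob leafG[OF IL]] by simp
    define G where "G \<omega> = (\<Sum>js\<in>L. pos js \<omega>) + ((eta' I + \<alpha> * sqrt (vs I)) - Mv I \<omega>)" for \<omega>
    have intS: "integrable P (\<lambda>\<omega>. \<Sum>js\<in>L. pos js \<omega>)"
      using tail by (intro Bochner_Integration.integrable_sum) auto
    have intR: "integrable P (\<lambda>\<omega>. (eta' I + \<alpha> * sqrt (vs I)) - Mv I \<omega>)"
      using MI by (intro Bochner_Integration.integrable_diff) auto
    have intG: "integrable P G" unfolding G_def using intS intR by (rule Bochner_Integration.integrable_add)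
    have DG: "D \<omega> \<le> G \<omega>" for \<omega>
    proof -
      have "Max ((\<lambda>js. Mv js \<omega>) ` L) \<in> (\<lambda>js. Mv js \<omega>) ` L"
        using finL IL by (intro Max_in) auto
      then obtain i where iL: "i \<in> L" and im: "Max ((\<lambda>js. Mv js \<omega>) ` L) = Mv i \<omega>" by auto
      have u: "eta' i + \<alpha> * sqrt (vs i) \<le> eta' I + \<alpha> * sqrt (vs I)"
        using I_max iL unfolding L_def ucb_def eta'_def vs_def \<alpha>_def by blast
      have "Mv i \<omega> \<le> pos i \<omega> + (eta' i + \<alpha> * sqrt (vs i))" unfolding pos_def by simp
      moreover have "pos i \<omega> \<le> (\<Sum>js\<in>L. pos js \<omega>)"
        by (rule member_le_sum[OF iL _ finL]) (simp add: pos_def)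
      ultimately show ?thesis unfolding D_def G_def im using u by linarith
    qed
    have intD: "integrable P D"
    proof (rule Bochner_Integration.integrable_bound[OF intG D_meas])
      show "AE x in P. norm (D x) \<le> norm (G x)"
        using DG Dnn by (intro AE_I2) (smt (verit) real_norm_def)
    qed
    have "integral\<^sup>L P D \<le> integral\<^sup>L P G"
      by (rule Bochner_Integration.integral_mono[OF intD intG DG])
    also have "integral\<^sup>L P G = (\<Sum>js\<in>L. integral\<^sup>L P (pos js)) + \<alpha> * sqrt (vs I)"
    proof -
      have "integral\<^sup>L P G = integral\<^sup>L P (\<lambda>\<omega>. \<Sum>js\<in>L. pos js \<omega>) + integral\<^sup>L P (\<lambda>\<omega>. (eta' I + \<alpha> * sqrt (vs I)) - Mv I \<omega>)"
        unfolding G_def using intS intR by (rule Bochner_Integration.integral_add)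
      also have "integral\<^sup>L P (\<lambda>\<omega>. \<Sum>js\<in>L. pos js \<omega>) = (\<Sum>js\<in>L. integral\<^sup>L P (pos js))"
        using tail by (intro Bochner_Integration.integral_sum) auto
      also have "integral\<^sup>L P (\<lambda>\<omega>. (eta' I + \<alpha> * sqrt (vs I)) - Mv I \<omega>) = \<alpha> * sqrt (vs I)"
        using MI by (subst Bochner_Integration.integral_diff) (auto simp: prob_space)
      finally show ?thesis .
    qed
    also have "(\<Sum>js\<in>L. integral\<^sup>L P (pos js)) \<le> (\<Sum>js\<in>L. real d * E)"
    proof (rule sum_mono)
      fix js assume js: "js \<in> L"
      have "integral\<^sup>L P (pos js) \<le> sqrt (vs js) * E" using tail[OF js] unfolding E_def by simp
      also have "\<dots> \<le> real d * E" using sig_le[OF js] E0 by (rule mult_right_mono)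
      finally show "integral\<^sup>L P (pos js) \<le> real d * E" .
    qed
    also have "(\<Sum>js\<in>L. real d * E) = real (card L) * (real d * exp (-(\<alpha>^2)/2) / (exp 1 * \<alpha>))"
      unfolding E_def by simp
    finally have "integral\<^sup>L P D \<le> sqrt (2 * real d * pi) / real ((t + d - 1) ^ 2) + \<alpha> * sqrt (vs I)"
      using fa by linarith
    then show ?thesis using intD unfolding \<alpha>_def by simp
  qed
  show ?thesis unfolding goal_eq using main unfolding vs_def .
qed

end
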